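(* Let $F$ be a $C^2$ Finsler metric on $\mathbb{R}^2$ that is projective and periodic, i.e. $F(\mathbf{x}+\mathbf{m},\mathbf{v})=F(\mathbf{x},\mathbf{v})$ for all $\mathbf{m}\in\mathbb{Z}^2$. Then $F$ is the sum of a Minkowski norm and the differential of a $C^3$ function on the plane: there exist a Minkowski norm $\|\cdot\|$ on $\mathbb{R}^2$ and a $C^3$ function $f:\mathbb{R}^2\to\mathbb{R}$ with $F(\mathbf{x},\mathbf{v})=\|\mathbf{v}\|+df_{\mathbf{x}}(\mathbf{v})$.
   Context: A Minkowski norm on a finite-dimensional real vector space is a function $\|\cdot\|\ge 0$, $C^2$ outside the origin, vanishing only at $\mathbf{0}$, positively homogeneous of degree one, satisfying the triangle inequality, and such that the Hessian of $\mathbf{x}\mapsto\|\mathbf{x}\|^2$ is positive definite outside the origin. A $C^2$ Finsler metric on $\mathbb{R}^2$ is a continuous $F:T\mathbb{R}^2\to[0,\infty)$, $C^2$ outside the zero section, restricting to a Minkowski norm on each tangent space (not necessarily reversible). It is projective if the parametrized lines $t\mapsto\mathbf{x}+t\mathbf{v}$ solve its Euler–Lagrange equations. *)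

theory Defs
  imports "HOL-Analysis.Analysis"
begin

fun Ck :: "nat \<Rightarrow> 'a::euclidean_space set \<Rightarrow> ('a \<Rightarrow> real) \<Rightarrow> bool" where
  "Ck 0 S f = continuous_on S f"
| "Ck (Suc k) S f = (f differentiable_on S \<and>
      (\<forall>b\<in>Basis. Ck k S (\<lambda>x. frechet_derivative f (at x) b)))"

definition hess_form :: "('a::euclidean_space \<Rightarrow> real) \<Rightarrow> 'a \<Rightarrow> 'a \<Rightarrow> real" where
  "hess_form g x u = frechet_derivative (\<lambda>y. frechet_derivative g (at y) u) (at x) u"

definition minkowski_norm :: "(real^2 \<Rightarrow> real) \<Rightarrow> bool" where
  "minkowski_norm N \<longleftrightarrow>
     (\<forall>v. N v \<ge> 0) \<and>
     Ck 2 (- {0}) N \<and>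
     (\<forall>v. N v = 0 \<longleftrightarrow> v = 0) \<and>
     (\<forall>t v. t > 0 \<longrightarrow> N (t *\<^sub>R v) = t * N v) \<and>
     (\<forall>v w. N (v + w) \<le> N v + N w) \<and>
     (\<forall>v. v \<noteq> 0 \<longrightarrow> (\<forall>u. u \<noteq> 0 \<longrightarrow> hess_form (\<lambda>y. (N y)\<^sup>2) v u > 0))"

definition finsler_C2 :: "(real^2 \<Rightarrow> real^2 \<Rightarrow> real) \<Rightarrow> bool" where
  "finsler_C2 F \<longleftrightarrow>
     continuous_on UNIV (\<lambda>p. F (fst p) (snd p)) \<and>
     (\<forall>x v. F x v \<ge> 0) \<and>
     Ck 2 {p. snd p \<noteq> 0} (\<lambda>p. F (fst p) (snd p)) \<and>
     (\<forall>x. minkowski_norm (F x))"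

text \<open>Projective: the lines s \<mapsto> x + s v (v \<noteq> 0) solve the Euler--Lagrange equations
  d/ds (\<partial>F/\<partial>v (\<gamma>(s), \<gamma>'(s))) = \<partial>F/\<partial>x (\<gamma>(s), \<gamma>'(s)).\<close>
definition projective :: "(real^2 \<Rightarrow> real^2 \<Rightarrow> real) \<Rightarrow> bool" where
  "projective F \<longleftrightarrow>
     (\<forall>x v t b. v \<noteq> 0 \<longrightarrow>
        ((\<lambda>s. frechet_derivative (\<lambda>w. F (x + s *\<^sub>R v) w) (at v) b)
           has_real_derivative
         frechet_derivative (\<lambda>y. F y v) (at (x + t *\<^sub>R v)) b) (at t))"

definition periodic :: "(real^2 \<Rightarrow> real^2 \<Rightarrow> real) \<Rightarrow> bool" where
  "periodic F \<longleftrightarrow>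
     (\<forall>m x v. (\<forall>i. m $ i \<in> \<int>) \<longrightarrow> F (x + m) v = F x v)"

end

theory Submission
  imports Defs
begin


lemma fd_cong_open:
  assumes "open S" "z \<in> S" "\<And>y. y \<in> S \<Longrightarrow> f y = g y"
  shows "frechet_derivative f (at z) = frechet_derivative g (at z)"
proof -
  have "\<And>D. (f has_derivative D) (at z) \<longleftrightarrow> (g has_derivative D) (at z)"
    using has_derivative_transform_within_open[OF _ assms(1,2)] assms(3) by metis
  then show ?thesis unfolding frechet_derivative_def by simp
qed

lemma fd_works: "f differentiable (at x) \<Longrightarrow> (f has_derivative frechet_derivative f (at x)) (at x)"
  using frechet_derivative_works by blast

lemma fd_linear: "f differentiable (at x) \<Longrightarrow> linear (frechet_derivative f (at x))"
  using fd_works has_derivative_linear by blast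

lemma linear_basis_expand:
  fixes L :: "'a::euclidean_space \<Rightarrow> real"
  assumes "linear L"
  shows "L d = (\<Sum>b\<in>Basis. (d \<bullet> b) * L b)"
proof -
  have "L d = L (\<Sum>b\<in>Basis. (d \<bullet> b) *\<^sub>R b)" by (simp add: euclidean_representation)
  also have "\<dots> = (\<Sum>b\<in>Basis. (d \<bullet> b) * L b)"
    using assms by (simp add: linear_sum linear_scale)
  finally show ?thesis .
qed

definition C1 :: "'a::euclidean_space set \<Rightarrow> ('a \<Rightarrow> real) \<Rightarrow> bool" where
  "C1 S f \<longleftrightarrow> f differentiable_on S \<and> (\<forall>d. continuous_on S (\<lambda>z. frechet_derivative f (at z) d))"

lemma diff_on_open_at: "f differentiable_on S \<Longrightarrow> open S \<Longrightarrow> z \<in> S \<Longrightarrow> f differentiable (at z)"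
  by (simp add: differentiable_on_eq_differentiable_at)

lemma Ck1_C1:
  assumes "open S" "Ck 1 S f"
  shows "C1 S f"
proof -
  have d: "f differentiable_on S" and c: "\<And>b. b \<in> Basis \<Longrightarrow> continuous_on S (\<lambda>x. frechet_derivative f (at x) b)"
    using assms(2) by (auto simp: numeral_eq_Suc)
  have "continuous_on S (\<lambda>z. frechet_derivative f (at z) d)" for d
  proof -
    have "continuous_on S (\<lambda>z. \<Sum>b\<in>Basis. (d \<bullet> b) * frechet_derivative f (at z) b)"
      by (intro continuous_intros c)
    moreover have "\<And>z. z \<in> S \<Longrightarrow> frechet_derivative f (at z) d = (\<Sum>b\<in>Basis. (d \<bullet> b) * frechet_derivative f (at z) b)"
      using linear_basis_expand fd_linear diff_on_open_at[OF d assms(1)] by blast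
    ultimately show ?thesis using continuous_on_cong by fastforce
  qed
  then show ?thesis using d by (simp add: C1_def)
qed

lemma Ck2_C1:
  assumes "open S" "Ck 2 S f"
  shows "C1 S f" "C1 S (\<lambda>z. frechet_derivative f (at z) c)"
proof -
  have d: "f differentiable_on S" and c1: "\<And>b. b \<in> Basis \<Longrightarrow> Ck 1 S (\<lambda>x. frechet_derivative f (at x) b)"
    using assms(2) by (auto simp: numeral_eq_Suc)
  have c: "\<And>b. b \<in> Basis \<Longrightarrow> continuous_on S (\<lambda>x. frechet_derivative f (at x) b)"
    using c1 by (auto simp: numeral_eq_Suc intro: differentiable_imp_continuous_on)
  have "continuous_on S (\<lambda>z. frechet_derivative f (at z) d)" for d
  proof -
    have "continuous_on S (\<lambda>z. \<Sum>b\<in>Basis. (d \<bullet> b) * frechet_derivative f (at z) b)"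
      by (intro continuous_intros c)
    moreover have "\<And>z. z \<in> S \<Longrightarrow> frechet_derivative f (at z) d = (\<Sum>b\<in>Basis. (d \<bullet> b) * frechet_derivative f (at z) b)"
      using linear_basis_expand fd_linear diff_on_open_at[OF d assms(1)] by blast
    ultimately show ?thesis using continuous_on_cong by fastforce
  qed
  then show "C1 S f" using d by (simp add: C1_def)
  have C1b: "\<And>b. b \<in> Basis \<Longrightarrow> C1 S (\<lambda>x. frechet_derivative f (at x) b)"
    using c1 Ck1_C1 assms(1) by blast
  define h where "h = (\<lambda>z. \<Sum>b\<in>Basis. (c \<bullet> b) * frechet_derivative f (at z) b)"
  have eq: "\<And>z. z \<in> S \<Longrightarrow> frechet_derivative f (at z) c = h z"
    unfolding h_def using linear_basis_expand fd_linear diff_on_open_at[OF d assms(1)] by blast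
  have hd: "(h has_derivative (\<lambda>d. \<Sum>b\<in>Basis. (c \<bullet> b) * frechet_derivative (\<lambda>x. frechet_derivative f (at x) b) (at z) d)) (at z)"
    if "z \<in> S" for z
  proof -
    have D: "\<And>b. b \<in> Basis \<Longrightarrow> ((\<lambda>x. frechet_derivative f (at x) b) has_derivative
       frechet_derivative (\<lambda>x. frechet_derivative f (at x) b) (at z)) (at z)"
      using C1b diff_on_open_at[OF _ assms(1) that] unfolding C1_def by (metis fd_works)
    show ?thesis unfolding h_def
      by (rule has_derivative_sum, rule has_derivative_mult_right, erule D)
  qed
  have diffS: "(\<lambda>z. frechet_derivative f (at z) c) differentiable_on S"
    unfolding differentiable_on_def
  proof
    fix z assume z: "z \<in> S"
    show "(\<lambda>z. frechet_derivative f (at z) c) differentiable at z within S"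
    proof -
      have "((\<lambda>z. frechet_derivative f (at z) c) has_derivative (\<lambda>d. \<Sum>b\<in>Basis. (c \<bullet> b) * frechet_derivative (\<lambda>x. frechet_derivative f (at x) b) (at z) d)) (at z)"
        by (rule has_derivative_transform_within_open[OF hd[OF z] assms(1) z]) (simp add: eq)
      then show ?thesis unfolding differentiable_def using has_derivative_at_withinI by blast
    qed
  qed
  have "continuous_on S (\<lambda>z. frechet_derivative (\<lambda>z. frechet_derivative f (at z) c) (at z) d)" for d
  proof -
    have "continuous_on S (\<lambda>z. \<Sum>b\<in>Basis. (c \<bullet> b) * frechet_derivative (\<lambda>x. frechet_derivative f (at x) b) (at z) d)"
      using C1b unfolding C1_def by (intro continuous_intros) auto
    moreover have "frechet_derivative (\<lambda>z. frechet_derivative f (at z) c) (at z) d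
        = (\<Sum>b\<in>Basis. (c \<bullet> b) * frechet_derivative (\<lambda>x. frechet_derivative f (at x) b) (at z) d)" if z: "z \<in> S" for z
    proof -
      have "frechet_derivative (\<lambda>z. frechet_derivative f (at z) c) (at z) = frechet_derivative h (at z)"
        by (rule fd_cong_open[OF assms(1) z eq])
      also have "\<dots> = (\<lambda>d. \<Sum>b\<in>Basis. (c \<bullet> b) * frechet_derivative (\<lambda>x. frechet_derivative f (at x) b) (at z) d)"
        using frechet_derivative_at[OF hd[OF z]] by simp
      finally show ?thesis by simp
    qed
    ultimately show ?thesis using continuous_on_cong by fastforce
  qed
  then show "C1 S (\<lambda>z. frechet_derivative f (at z) c)" using diffS by (simp add: C1_def)
qed


type_synonym R2 = "real^2"

locale FP =
  fixes F :: "real^2 \<Rightarrow> real^2 \<Rightarrow> real"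
  assumes fin: "finsler_C2 F" and proj: "projective F" and per: "periodic F"
begin

definition "G = (\<lambda>p::(R2 \<times> R2). F (fst p) (snd p))"
definition "S = {p::(R2 \<times> R2). snd p \<noteq> 0}"
definition "DG z c = frechet_derivative G (at z) c"
definition "D2 z c d = frechet_derivative (\<lambda>z. DG z c) (at z) d"

lemma S_open: "open S"
  unfolding S_def by (intro open_Collect_neq continuous_intros)

lemma inS[simp]: "(x, v) \<in> S \<longleftrightarrow> v \<noteq> 0"
  by (simp add: S_def)

lemma G_C2: "Ck 2 S G"
  using fin unfolding finsler_C2_def G_def S_def by simp

lemma G_C1: "C1 S G" "C1 S (\<lambda>z. DG z c)"
  using Ck2_C1[OF S_open G_C2] unfolding DG_def[abs_def] by auto

lemma G_deriv: "z \<in> S \<Longrightarrow> (G has_derivative DG z) (at z)"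
  using G_C1(1) unfolding C1_def DG_def[abs_def]
  by (metis S_open diff_on_open_at fd_works)

lemma DG_linear: "z \<in> S \<Longrightarrow> linear (DG z)"
  using G_deriv has_derivative_linear by blast

lemma DG_deriv: "z \<in> S \<Longrightarrow> ((\<lambda>z. DG z c) has_derivative D2 z c) (at z)"
proof -
  assume z: "z \<in> S"
  have "(\<lambda>z. DG z c) differentiable (at z)"
    using G_C1(2)[of c] unfolding C1_def using S_open diff_on_open_at z by blast
  then show ?thesis unfolding D2_def[abs_def] by (rule fd_works)
qed

lemma D2_linear: "z \<in> S \<Longrightarrow> linear (D2 z c)"
  using DG_deriv has_derivative_linear by blast

lemma D2_cont: "continuous_on S (\<lambda>z. D2 z c d)"
  using G_C1(2)[of c] unfolding C1_def D2_def by blast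

lemma DG_cont: "continuous_on S (\<lambda>z. DG z c)"
  using G_C1(1) unfolding C1_def DG_def by blast

lemma G_cont: "continuous_on S G"
  using G_C1(1) unfolding C1_def using differentiable_imp_continuous_on by blast

lemma Fv_deriv:
  assumes "v \<noteq> 0"
  shows "(F x has_derivative (\<lambda>k. DG (x,v) (0,k))) (at v)"
proof -
  have e: "((\<lambda>k. (x,k)) has_derivative (\<lambda>k. (0,k))) (at v)"
    by (rule has_derivative_Pair[OF has_derivative_const has_derivative_ident])
  have "((\<lambda>k. G (x,k)) has_derivative (\<lambda>k. DG (x,v) (0,k))) (at v)"
    using has_derivative_compose[OF e G_deriv] assms by simp
  then show ?thesis by (simp add: G_def)
qed

lemma Fx_deriv:
  assumes "v \<noteq> 0"
  shows "((\<lambda>y. F y v) has_derivative (\<lambda>h. DG (x,v) (h,0))) (at x)"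
proof -
  have e: "((\<lambda>y. (y,v)) has_derivative (\<lambda>h. (h,0))) (at x)"
    by (rule has_derivative_Pair[OF has_derivative_ident has_derivative_const])
  have "((\<lambda>y. G (y,v)) has_derivative (\<lambda>h. DG (x,v) (h,0))) (at x)"
    using has_derivative_compose[OF e G_deriv] assms by simp
  then show ?thesis by (simp add: G_def)
qed

lemma fd_Fv: "v \<noteq> 0 \<Longrightarrow> frechet_derivative (F x) (at v) k = DG (x,v) (0,k)"
  using frechet_derivative_at[OF Fv_deriv] by metis

lemma fd_Fx: "v \<noteq> 0 \<Longrightarrow> frechet_derivative (\<lambda>y. F y v) (at x) h = DG (x,v) (h,0)"
  using frechet_derivative_at[OF Fx_deriv] by metis

lemma hamel:
  assumes "v \<noteq> 0"
  shows "((\<lambda>s. DG (x + s *\<^sub>R v, v) (0,b)) has_real_derivative DG (x + t *\<^sub>R v, v) (b,0)) (at t)"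
proof -
  have "((\<lambda>s. frechet_derivative (\<lambda>w. F (x + s *\<^sub>R v) w) (at v) b) has_real_derivative
         frechet_derivative (\<lambda>y. F y v) (at (x + t *\<^sub>R v)) b) (at t)"
    using proj assms unfolding projective_def by blast
  moreover have "(\<lambda>s. frechet_derivative (\<lambda>w. F (x + s *\<^sub>R v) w) (at v) b) = (\<lambda>s. DG (x + s *\<^sub>R v, v) (0,b))"
    using fd_Fv[OF assms] by simp
  ultimately show ?thesis using fd_Fx[OF assms] by simp
qed

lemma mink: "minkowski_norm (F x)"
  using fin unfolding finsler_C2_def by blast

lemma F_hom: "t > 0 \<Longrightarrow> F x (t *\<^sub>R v) = t * F x v"
  using mink unfolding minkowski_norm_def by blast

lemma F_zero[simp]: "F x 0 = 0"
  using mink unfolding minkowski_norm_def by blast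

lemma euler:
  assumes v: "v \<noteq> 0"
  shows "DG (x,v) (0,v) = F x v"
proof -
  have d1: "((\<lambda>c. F x (c *\<^sub>R v)) has_derivative (\<lambda>h. DG (x,v) (0, h *\<^sub>R v))) (at 1)"
  proof -
    have a: "(F x has_derivative (\<lambda>k. DG (x,v) (0,k))) (at ((\<lambda>c. c *\<^sub>R v) 1))"
      using Fv_deriv[OF v] by simp
    show ?thesis
      using has_derivative_compose[OF has_derivative_scaleR_left[OF has_derivative_ident, of v "at 1"] a] .
  qed
  have d2: "((\<lambda>c::real. c * F x v) has_derivative (\<lambda>h. h * F x v)) (at 1)"
    by (intro derivative_eq_intros) auto
  have d3: "((\<lambda>c. F x (c *\<^sub>R v)) has_derivative (\<lambda>h. h * F x v)) (at 1)"
    by (rule has_derivative_transform_within_open[OF d2, of "{0<..}"]) (auto simp: F_hom)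
  have "(\<lambda>h. DG (x,v) (0, h *\<^sub>R v)) = (\<lambda>h. h * F x v)"
    using has_derivative_unique[OF d1 d3] .
  then have "DG (x,v) (0, 1 *\<^sub>R v) = 1 * F x v" by metis
  then show ?thesis by simp
qed

end


context FP
begin

lemma DG_add: "z \<in> S \<Longrightarrow> DG z (a + b) = DG z a + DG z b"
  using DG_linear linear_add by blast
lemma DG_scale: "z \<in> S \<Longrightarrow> DG z (c *\<^sub>R a) = c * DG z a"
  using DG_linear linear_scale by fastforce
lemma DG_diff: "z \<in> S \<Longrightarrow> DG z (a - b) = DG z a - DG z b"
  using DG_linear linear_diff by blast
lemma DG_neg: "z \<in> S \<Longrightarrow> DG z (- a) = - DG z a"
  using DG_linear linear_neg by blast
lemma DG_zero: "z \<in> S \<Longrightarrow> DG z 0 = 0"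
  using DG_linear linear_0 by blast
lemma DG_pair: "z \<in> S \<Longrightarrow> DG z (a, b) = DG z (a, 0) + DG z (0, b)"
  using DG_add[of z "(a,0)" "(0,b)"] by simp

lemma D2_scale: "z \<in> S \<Longrightarrow> D2 z c (t *\<^sub>R a) = t * D2 z c a"
  using D2_linear linear_scale by fastforce

lemma DG_cont2:
  assumes "continuous_on T A" "A ` T \<subseteq> S" "continuous_on T B"
  shows "continuous_on T (\<lambda>y. DG (A y) (B y))"
proof -
  have "continuous_on T (\<lambda>y. \<Sum>b\<in>Basis. (B y \<bullet> b) * DG (A y) b)"
    by (intro continuous_intros assms continuous_on_compose2[OF DG_cont assms(1,2)])
  moreover have "\<And>y. y \<in> T \<Longrightarrow> DG (A y) (B y) = (\<Sum>b\<in>Basis. (B y \<bullet> b) * DG (A y) b)"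
    using linear_basis_expand DG_linear assms(2) by blast
  ultimately show ?thesis using continuous_on_cong by fastforce
qed

lemma DG_hom:
  assumes c: "c > 0" and v: "v \<noteq> 0"
  shows "DG (x, c *\<^sub>R v) (0,k) = DG (x,v) (0,k)"
proof -
  have cv: "c *\<^sub>R v \<noteq> 0" using c v by simp
  have a: "(F x has_derivative (\<lambda>k. DG (x, c *\<^sub>R v) (0,k))) (at ((\<lambda>w. c *\<^sub>R w) v))"
    using Fv_deriv[OF cv] by simp
  have d1: "((\<lambda>w. F x (c *\<^sub>R w)) has_derivative (\<lambda>h. DG (x, c *\<^sub>R v) (0, c *\<^sub>R h))) (at v)"
    using has_derivative_compose[OF has_derivative_scaleR_right[OF has_derivative_ident, of c "at v"] a] .
  have d2: "((\<lambda>w. c * F x w) has_derivative (\<lambda>h. c * DG (x,v) (0,h))) (at v)"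
    by (rule has_derivative_mult_right[OF Fv_deriv[OF v]])
  have eq: "(\<lambda>w. F x (c *\<^sub>R w)) = (\<lambda>w. c * F x w)" using F_hom c by auto
  have "(\<lambda>h. DG (x, c *\<^sub>R v) (0, c *\<^sub>R h)) = (\<lambda>h. c * DG (x,v) (0,h))"
    using has_derivative_unique[OF d1 d2[folded eq]] .
  then have "DG (x, c *\<^sub>R v) (0, c *\<^sub>R k) = c * DG (x,v) (0,k)" by metis
  moreover have "DG (x, c *\<^sub>R v) (0, c *\<^sub>R k) = c * DG (x, c *\<^sub>R v) (0,k)"
    using DG_scale[of "(x, c *\<^sub>R v)" c "(0,k)"] cv by simp
  ultimately show ?thesis using c by simp
qed

lemma D2_hom:
  assumes c: "c > 0" and v: "v \<noteq> 0"
  shows "c * D2 (x, c *\<^sub>R v) (0,k) (0,h) = D2 (x,v) (0,k) (0,h)"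
proof -
  have cv: "c *\<^sub>R v \<noteq> 0" using c v by simp
  have e1: "((\<lambda>w. (x, c *\<^sub>R w)) has_derivative (\<lambda>h. (0, c *\<^sub>R h))) (at v)"
    by (rule has_derivative_Pair[OF has_derivative_const has_derivative_scaleR_right[OF has_derivative_ident]])
  have a: "((\<lambda>z. DG z (0,k)) has_derivative D2 (x, c *\<^sub>R v) (0,k)) (at ((\<lambda>w. (x, c *\<^sub>R w)) v))"
    using DG_deriv cv by simp
  have d1: "((\<lambda>w. DG (x, c *\<^sub>R w) (0,k)) has_derivative (\<lambda>h. D2 (x, c *\<^sub>R v) (0,k) (0, c *\<^sub>R h))) (at v)"
    using has_derivative_compose[OF e1 a] .
  have e2: "((\<lambda>w. (x, w)) has_derivative (\<lambda>h. (0, h))) (at v)"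
    by (rule has_derivative_Pair[OF has_derivative_const has_derivative_ident])
  have b: "((\<lambda>z. DG z (0,k)) has_derivative D2 (x, v) (0,k)) (at ((\<lambda>w. (x, w)) v))"
    using DG_deriv v by simp
  have d2: "((\<lambda>w. DG (x, w) (0,k)) has_derivative (\<lambda>h. D2 (x, v) (0,k) (0, h))) (at v)"
    using has_derivative_compose[OF e2 b] .
  have d2': "((\<lambda>w. DG (x, c *\<^sub>R w) (0,k)) has_derivative (\<lambda>h. D2 (x, v) (0,k) (0, h))) (at v)"
    by (rule has_derivative_transform_within_open[OF d2, of "-{0}"]) (use v c DG_hom in auto)
  have "(\<lambda>h. D2 (x, c *\<^sub>R v) (0,k) (0, c *\<^sub>R h)) = (\<lambda>h. D2 (x, v) (0,k) (0, h))"
    using has_derivative_unique[OF d1 d2'] .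
  then have "D2 (x, c *\<^sub>R v) (0,k) (0, c *\<^sub>R h) = D2 (x, v) (0,k) (0, h)" by metis
  moreover have "D2 (x, c *\<^sub>R v) (0,k) (0, c *\<^sub>R h) = c * D2 (x, c *\<^sub>R v) (0,k) (0,h)"
    using D2_scale[of "(x, c *\<^sub>R v)" "(0,k)" c "(0,h)"] cv by simp
  ultimately show ?thesis by simp
qed

end


context FP
begin

definition "lin (\<sigma>::real) (c::R2 \<times> R2) = (fst c + \<sigma> *\<^sub>R (snd c - fst c), snd c - fst c)"

definition "L z = integral (cbox 0 1) (\<lambda>\<sigma>::real. G (lin \<sigma> z))"

lemma lin_linear: "linear (lin \<sigma>)"
  unfolding lin_def by (rule linearI) (auto simp: algebra_simps)

lemma lin_bl: "bounded_linear (lin \<sigma>)"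
  using lin_linear linear_conv_bounded_linear by blast

lemma lin_cont: "continuous_on T (\<lambda>y. lin (s y) (c y))" if "continuous_on T s" "continuous_on T c"
  unfolding lin_def by (intro continuous_intros that)

lemma Phi_deriv:
  assumes w: "w \<noteq> 0"
  shows "((\<lambda>s. s * DG (p + s *\<^sub>R w, w) (0,k) + (1 - s) * DG (p + s *\<^sub>R w, w) (0,h)) has_real_derivative
    (DG (p + t *\<^sub>R w, w) (0,k) + t * DG (p + t *\<^sub>R w, w) (k,0)
     + ((-1) * DG (p + t *\<^sub>R w, w) (0,h) + (1 - t) * DG (p + t *\<^sub>R w, w) (h,0)))) (at t)"
proof -
  have a: "((\<lambda>s. s * DG (p + s *\<^sub>R w, w) (0,k)) has_real_derivative
      (1 * DG (p + t *\<^sub>R w, w) (0,k) + t * DG (p + t *\<^sub>R w, w) (k,0))) (at t)"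
    using DERIV_mult[OF DERIV_ident hamel[OF w]] by (simp add: algebra_simps)
  have b: "((\<lambda>s. (1 - s) * DG (p + s *\<^sub>R w, w) (0,h)) has_real_derivative
      ((-1) * DG (p + t *\<^sub>R w, w) (0,h) + (1 - t) * DG (p + t *\<^sub>R w, w) (h,0))) (at t)"
  proof -
    have "((\<lambda>s::real. 1 - s) has_real_derivative (-1)) (at t)"
      using DERIV_diff[OF DERIV_const DERIV_ident] by simp
    from DERIV_mult[OF this hamel[OF w]] show ?thesis by (simp add: algebra_simps)
  qed
  show ?thesis using DERIV_add[OF a b] by simp
qed

lemma integrand_eq:
  assumes w: "w \<noteq> 0"
  shows "DG (lin t (p, p + w)) (lin t (h, k)) =
    DG (p + t *\<^sub>R w, w) (0,k) + t * DG (p + t *\<^sub>R w, w) (k,0)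
     + ((-1) * DG (p + t *\<^sub>R w, w) (0,h) + (1 - t) * DG (p + t *\<^sub>R w, w) (h,0))"
proof -
  define z where "z = (p + t *\<^sub>R w, w)"
  have z: "z \<in> S" using w by (simp add: z_def)
  have e1: "lin t (p, p + w) = z" by (simp add: lin_def z_def)
  have e2: "lin t (h,k) = ((1 - t) *\<^sub>R (h, 0) + t *\<^sub>R (k, 0)) + ((0,k) - (0,h))"
    by (simp add: lin_def algebra_simps)
  have "DG (lin t (p, p + w)) (lin t (h, k)) =
      ((1 - t) * DG z (h,0) + t * DG z (k,0)) + (DG z (0,k) - DG z (0,h))"
    unfolding e1 e2 by (simp only: DG_add[OF z] DG_scale[OF z] DG_diff[OF z])
  then show ?thesis unfolding z_def by (simp add: algebra_simps)
qed

lemma integral_eval: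
  assumes w: "w \<noteq> 0"
  shows "integral (cbox 0 1) (\<lambda>t. DG (lin t (p, p + w)) (lin t (h, k))) = DG (p + w, w) (0,k) - DG (p, w) (0,h)"
proof -
  define \<Phi> where "\<Phi> = (\<lambda>s. s * DG (p + s *\<^sub>R w, w) (0,k) + (1 - s) * DG (p + s *\<^sub>R w, w) (0,h))"
  have "((\<lambda>t. DG (lin t (p, p + w)) (lin t (h, k))) has_integral (\<Phi> 1 - \<Phi> 0)) {0..1}"
  proof (rule fundamental_theorem_of_calculus)
    fix t :: real assume "t \<in> {0..1}"
    have "(\<Phi> has_real_derivative DG (lin t (p, p + w)) (lin t (h, k))) (at t)"
      unfolding integrand_eq[OF w] \<Phi>_def by (rule Phi_deriv[OF w])
    then show "(\<Phi> has_vector_derivative DG (lin t (p, p + w)) (lin t (h, k))) (at t within {0..1})"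
      using has_real_derivative_iff_has_vector_derivative has_vector_derivative_at_within by blast
  qed simp
  moreover have "\<Phi> 1 - \<Phi> 0 = DG (p + w, w) (0,k) - DG (p, w) (0,h)"
    by (simp add: \<Phi>_def)
  ultimately show ?thesis by (simp add: cbox_interval integral_unique)
qed

lemma L_deriv:
  assumes pq: "p \<noteq> q"
  shows "(L has_derivative (\<lambda>c. DG (q, q - p) (0, snd c) - DG (p, q - p) (0, fst c))) (at (p,q))"
proof -
  define z0 where "z0 = (p,q)"
  define r where "r = norm (q - p) / 2"
  define U where "U = ball z0 r"
  have r: "r > 0" using pq by (simp add: r_def)
  have z0U: "z0 \<in> U" using r by (simp add: U_def)
  have Uok: "lin \<sigma> z \<in> S" if z: "z \<in> U" for z \<sigma>
  proof -
    have d: "norm (z - z0) < r" using z by (simp add: U_def dist_norm norm_minus_commute)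
    have n1: "norm (fst z - p) \<le> norm (z - z0)"
      using norm_fst_le[of "fst z - p" "snd z - q"] by (cases z) (simp add: z0_def)
    have n2: "norm (snd z - q) \<le> norm (z - z0)"
      using norm_snd_le[of "snd z - q" "fst z - p"] by (cases z) (simp add: z0_def)
    have "norm ((snd z - fst z) - (q - p)) \<le> norm (snd z - q) + norm (fst z - p)"
      by (metis (no_types, lifting) add_diff_add diff_add_cancel norm_triangle_ineq4 add.commute
          diff_diff_add diff_diff_eq2 norm_minus_commute)
    also have "\<dots> < norm (q - p)" using n1 n2 d by (simp add: r_def)
    finally have "snd z - fst z \<noteq> 0" by (auto simp: norm_minus_commute)
    then show ?thesis by (simp add: lin_def S_def)
  qed
  define fx where "fx z \<sigma> = Blinfun (\<lambda>c. DG (lin \<sigma> z) (lin \<sigma> c))" for z \<sigma>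
  have bl: "bounded_linear (\<lambda>c. DG (lin \<sigma> z) (lin \<sigma> c))" if "z \<in> U" for z \<sigma>
  proof -
    have "linear (DG (lin \<sigma> z) \<circ> lin \<sigma>)"
      by (rule linear_compose[OF lin_linear DG_linear[OF Uok[OF that]]])
    then show ?thesis using linear_conv_bounded_linear by (auto simp: o_def)
  qed
  have fxa: "blinfun_apply (fx z \<sigma>) = (\<lambda>c. DG (lin \<sigma> z) (lin \<sigma> c))" if "z \<in> U" for z \<sigma>
    unfolding fx_def using bounded_linear_Blinfun_apply[OF bl[OF that]] .
  have deriv: "((\<lambda>z. G (lin \<sigma> z)) has_derivative blinfun_apply (fx z \<sigma>)) (at z within U)"
    if "z \<in> U" "\<sigma> \<in> cbox 0 1" for z \<sigma>
    unfolding fxa[OF that(1)]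
    using has_derivative_compose[OF bounded_linear_imp_has_derivative[OF lin_bl] G_deriv[OF Uok[OF that(1)]]] .
  have integ: "(\<lambda>\<sigma>. G (lin \<sigma> z)) integrable_on cbox 0 1" if "z \<in> U" for z
  proof (rule integrable_continuous)
    show "continuous_on (cbox 0 1) (\<lambda>\<sigma>. G (lin \<sigma> z))"
    proof (rule continuous_on_compose2[OF G_cont])
      show "continuous_on (cbox 0 1) (\<lambda>\<sigma>. lin \<sigma> z)"
        by (rule lin_cont[OF continuous_on_id continuous_on_const])
      show "(\<lambda>\<sigma>. lin \<sigma> z) ` cbox 0 1 \<subseteq> S" using Uok[OF that] by blast
    qed
  qed
  have cont: "continuous_on (U \<times> cbox 0 1) (\<lambda>(z, \<sigma>). fx z \<sigma>)"
  proof (rule continuous_on_blinfun_componentwise)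
    fix i :: "R2 \<times> R2" assume "i \<in> Basis"
    have A: "continuous_on (U \<times> cbox 0 1) (\<lambda>x. DG (lin (snd x) (fst x)) (lin (snd x) i))"
    proof (rule DG_cont2)
      show "continuous_on (U \<times> cbox 0 1) (\<lambda>x. lin (snd x) (fst x))"
        by (rule lin_cont[OF continuous_on_snd[OF continuous_on_id] continuous_on_fst[OF continuous_on_id]])
      show "continuous_on (U \<times> cbox 0 1) (\<lambda>x. lin (snd x) i)"
        by (rule lin_cont[OF continuous_on_snd[OF continuous_on_id] continuous_on_const])
      show "(\<lambda>x. lin (snd x) (fst x)) ` (U \<times> cbox 0 1) \<subseteq> S" using Uok by auto
    qed
    have B: "\<And>x. x \<in> U \<times> cbox 0 1 \<Longrightarrow> blinfun_apply ((\<lambda>(z, \<sigma>). fx z \<sigma>) x) i = DG (lin (snd x) (fst x)) (lin (snd x) i)"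
      by (simp add: case_prod_beta fxa mem_Times_iff)
    show "continuous_on (U \<times> cbox 0 1) (\<lambda>x. blinfun_apply ((\<lambda>(z, \<sigma>). fx z \<sigma>) x) i)"
      by (rule continuous_on_eq[OF A]) (simp add: B)
  qed
  have "((\<lambda>z. integral (cbox 0 1) (\<lambda>\<sigma>. G (lin \<sigma> z))) has_derivative integral (cbox 0 1) (fx z0)) (at z0 within U)"
    by (rule leibniz_rule[OF deriv integ cont z0U], assumption+, unfold U_def, rule convex_ball)
  then have LD: "(L has_derivative integral (cbox 0 1) (fx z0)) (at z0)"
    unfolding L_def[abs_def] using at_within_open[OF z0U] by (simp add: U_def)
  have fxint: "fx z0 integrable_on cbox 0 1"
  proof (rule integrable_continuous)
    show "continuous_on (cbox 0 1) (fx z0)"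
    proof -
      have "continuous_on (cbox 0 1) (\<lambda>\<sigma>. (\<lambda>(z, \<sigma>). fx z \<sigma>) (z0, \<sigma>))"
        by (rule continuous_on_compose2[OF cont continuous_on_Pair[OF continuous_on_const continuous_on_id]])
          (use z0U in blast)
      then show ?thesis by simp
    qed
  qed
  have "blinfun_apply (integral (cbox 0 1) (fx z0)) c = DG (q, q - p) (0, snd c) - DG (p, q - p) (0, fst c)" for c
  proof -
    have "blinfun_apply (integral (cbox 0 1) (fx z0)) c = integral (cbox 0 1) (\<lambda>\<sigma>. blinfun_apply (fx z0 \<sigma>) c)"
      by (rule blinfun_apply_integral[OF fxint])
    also have "\<dots> = integral (cbox 0 1) (\<lambda>t. DG (lin t (p, p + (q - p))) (lin t (fst c, snd c)))"
      using fxa[OF z0U] by (simp add: z0_def)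
    also have "\<dots> = DG (p + (q - p), q - p) (0, snd c) - DG (p, q - p) (0, fst c)"
      by (rule integral_eval) (use pq in simp)
    finally show ?thesis by simp
  qed
  then have "blinfun_apply (integral (cbox 0 1) (fx z0)) = (\<lambda>c. DG (q, q - p) (0, snd c) - DG (p, q - p) (0, fst c))"
    by (rule ext)
  then show ?thesis using LD unfolding z0_def by simp
qed

end


lemma schwarz2:
  fixes \<phi> A B Bt :: "real \<Rightarrow> real \<Rightarrow> real"
  assumes \<delta>: "\<delta> > 0"
  and phis: "\<And>s t. \<bar>s\<bar> < \<delta> \<Longrightarrow> \<bar>t\<bar> < \<delta> \<Longrightarrow> ((\<lambda>s. \<phi> s t) has_real_derivative B s t) (at s)"
  and phit: "\<And>s t. \<bar>s\<bar> < \<delta> \<Longrightarrow> \<bar>t\<bar> < \<delta> \<Longrightarrow> ((\<lambda>t. \<phi> s t) has_real_derivative A s t) (at t)"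
  and Bt: "\<And>s t. \<bar>s\<bar> < \<delta> \<Longrightarrow> \<bar>t\<bar> < \<delta> \<Longrightarrow> ((\<lambda>t. B s t) has_real_derivative Bt s t) (at t)"
  and As: "((\<lambda>s. A s 0) has_real_derivative As0) (at 0)"
  and cont: "continuous_on ({-\<delta><..<\<delta>} \<times> {-\<delta><..<\<delta>}) (\<lambda>(s,t). Bt s t)"
  shows "As0 = Bt 0 0"
proof -
  define d where "d = \<delta> / 2"
  have d: "d > 0" "d < \<delta>" using \<delta> by (auto simp: d_def)
  define U where "U = {-\<delta><..<\<delta>::real}"
  have U: "open U" "convex U" "0 \<in> U" using \<delta> by (auto simp: U_def)
  have key: "A s 0 - A 0 0 = integral (cbox 0 s) (\<lambda>\<sigma>. Bt \<sigma> 0)" if s: "0 \<le> s" "s \<le> d" for s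
  proof -
    have sU: "\<And>\<sigma>. \<sigma> \<in> cbox 0 s \<Longrightarrow> \<bar>\<sigma>\<bar> < \<delta>" using s d by (auto simp: cbox_interval)
    have ftc0: "((\<lambda>\<sigma>. B \<sigma> t) has_integral (\<phi> s t - \<phi> 0 t)) (cbox 0 s)" if t: "t \<in> U" for t
    proof -
      have "((\<lambda>\<sigma>. B \<sigma> t) has_integral (\<phi> s t - \<phi> 0 t)) {0..s}"
      proof (rule fundamental_theorem_of_calculus)
        fix \<sigma> assume "\<sigma> \<in> {0..s}"
        then have "((\<lambda>s. \<phi> s t) has_real_derivative B \<sigma> t) (at \<sigma>)"
          using phis sU t by (auto simp: U_def cbox_interval)
        then show "((\<lambda>s. \<phi> s t) has_vector_derivative B \<sigma> t) (at \<sigma> within {0..s})"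
          using has_real_derivative_iff_has_vector_derivative has_vector_derivative_at_within by blast
      qed (use s in simp)
      then show ?thesis by (simp add: cbox_interval)
    qed
    have ftc: "integral (cbox 0 s) (\<lambda>\<sigma>. B \<sigma> t) = \<phi> s t - \<phi> 0 t" if t: "t \<in> U" for t
      using ftc0[OF t] by (rule integral_unique)
    have leib: "((\<lambda>t. integral (cbox 0 s) (\<lambda>\<sigma>. B \<sigma> t)) has_field_derivative integral (cbox 0 s) (\<lambda>\<sigma>. Bt \<sigma> 0)) (at 0 within U)"
    proof (rule leibniz_rule_field_derivative[where fx="\<lambda>t \<sigma>. Bt \<sigma> t"])
      fix t \<sigma> assume "t \<in> U" "\<sigma> \<in> cbox 0 s"
      then show "((\<lambda>t. B \<sigma> t) has_field_derivative Bt \<sigma> t) (at t within U)"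
        using Bt sU by (auto simp: U_def intro: has_field_derivative_at_within)
    next
      fix t assume t: "t \<in> U"
      show "(\<lambda>\<sigma>. B \<sigma> t) integrable_on cbox 0 s" using ftc0[OF t] by blast
    next
      show "continuous_on (U \<times> cbox 0 s) (\<lambda>(t, \<sigma>). Bt \<sigma> t)"
      proof -
        have "continuous_on (U \<times> cbox 0 s) ((\<lambda>(s,t). Bt s t) \<circ> (\<lambda>(t,\<sigma>). (\<sigma>, t)))"
        proof (rule continuous_on_compose)
          show "continuous_on (U \<times> cbox 0 s) (\<lambda>(t, \<sigma>). (\<sigma>, t))"
            by (simp add: case_prod_beta continuous_on_Pair continuous_on_fst continuous_on_snd continuous_on_id)
          show "continuous_on ((\<lambda>(t, \<sigma>). (\<sigma>, t)) ` (U \<times> cbox 0 s)) (\<lambda>(s, t). Bt s t)"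
            by (rule continuous_on_subset[OF cont]) (use sU in \<open>auto simp: U_def\<close>)
        qed
        then show ?thesis by (simp add: o_def case_prod_beta)
      qed
    qed (use U in auto)
    have leib': "((\<lambda>t. \<phi> s t - \<phi> 0 t) has_field_derivative integral (cbox 0 s) (\<lambda>\<sigma>. Bt \<sigma> 0)) (at 0)"
      by (rule has_field_derivative_transform_within_open[OF leib[unfolded at_within_open[OF U(3,1)]] U(1,3)])
         (rule ftc)
    have "((\<lambda>t. \<phi> s t - \<phi> 0 t) has_field_derivative A s 0 - A 0 0) (at 0)"
      using phit s d \<delta> by (intro DERIV_diff) auto
    then show ?thesis using DERIV_unique leib' by blast
  qed
  have "continuous_on {0..d} (\<lambda>\<sigma>. (\<lambda>(s,t). Bt s t) (\<sigma>, 0))"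
    by (rule continuous_on_compose2[OF cont continuous_on_Pair[OF continuous_on_id continuous_on_const]])
       (use d in auto)
  then have "continuous_on {0..d} (\<lambda>\<sigma>. Bt \<sigma> 0)" by simp
  then have J: "((\<lambda>u. integral {0..u} (\<lambda>\<sigma>. Bt \<sigma> 0)) has_vector_derivative Bt 0 0) (at 0 within {0..d})"
    using integral_has_vector_derivative[of 0 d "\<lambda>\<sigma>. Bt \<sigma> 0" 0] d by auto
  have "((\<lambda>s. A s 0 - A 0 0) has_vector_derivative As0) (at 0 within {0..d})"
    using DERIV_diff[OF As DERIV_const] has_real_derivative_iff_has_vector_derivative has_vector_derivative_at_within
    by fastforce
  then have "((\<lambda>u. integral {0..u} (\<lambda>\<sigma>. Bt \<sigma> 0)) has_vector_derivative As0) (at 0 within {0..d})"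
    by (rule has_vector_derivative_transform_within[OF _ d(1)]) (use key d in \<open>auto simp: cbox_interval\<close>)
  then show ?thesis
    using vector_derivative_unique_within_closed_interval[of 0 d 0] J d by (auto simp: cbox_interval)
qed

lemma aff_deriv: "((\<lambda>x::real. a + x *\<^sub>R v) has_derivative (\<lambda>h. h *\<^sub>R v)) F"
  using has_derivative_add[OF has_derivative_const[of a F] has_derivative_scaleR_left[OF has_derivative_ident, of v F]] by simp

context FP
begin

lemma DG_line:
  assumes "y + t *\<^sub>R u \<noteq> 0"
  shows "((\<lambda>t. DG (x + t *\<^sub>R v, y + t *\<^sub>R u) c) has_real_derivative D2 (x + t *\<^sub>R v, y + t *\<^sub>R u) c (v, u)) (at t)"
proof -
  have e: "((\<lambda>t. (x + t *\<^sub>R v, y + t *\<^sub>R u)) has_derivative (\<lambda>dt. (dt *\<^sub>R v, dt *\<^sub>R u))) (at t)"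
    by (intro has_derivative_Pair aff_deriv)
  have z: "(x + t *\<^sub>R v, y + t *\<^sub>R u) \<in> S" using assms by simp
  have "((\<lambda>t. DG (x + t *\<^sub>R v, y + t *\<^sub>R u) c) has_derivative (\<lambda>dt. D2 (x + t *\<^sub>R v, y + t *\<^sub>R u) c (dt *\<^sub>R v, dt *\<^sub>R u))) (at t)"
    using has_derivative_compose[OF e DG_deriv[OF z]] .
  moreover have "(\<lambda>dt. D2 (x + t *\<^sub>R v, y + t *\<^sub>R u) c (dt *\<^sub>R v, dt *\<^sub>R u)) = (*) (D2 (x + t *\<^sub>R v, y + t *\<^sub>R u) c (v, u))"
  proof
    fix dt :: real
    have "D2 (x + t *\<^sub>R v, y + t *\<^sub>R u) c (dt *\<^sub>R (v, u)) = dt * D2 (x + t *\<^sub>R v, y + t *\<^sub>R u) c (v, u)"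
      by (rule D2_scale[OF z])
    then show "D2 (x + t *\<^sub>R v, y + t *\<^sub>R u) c (dt *\<^sub>R v, dt *\<^sub>R u) = D2 (x + t *\<^sub>R v, y + t *\<^sub>R u) c (v, u) * dt"
      by simp
  qed
  ultimately show ?thesis unfolding has_field_derivative_def by simp
qed

lemma L_line:
  assumes "b + t *\<^sub>R k \<noteq> a + t *\<^sub>R h"
  shows "((\<lambda>t. L (a + t *\<^sub>R h, b + t *\<^sub>R k)) has_real_derivative
     (DG (b + t *\<^sub>R k, (b + t *\<^sub>R k) - (a + t *\<^sub>R h)) (0,k) - DG (a + t *\<^sub>R h, (b + t *\<^sub>R k) - (a + t *\<^sub>R h)) (0,h))) (at t)"
proof -
  define P where "P = a + t *\<^sub>R h"
  define Q where "Q = b + t *\<^sub>R k"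
  have PQ: "P \<noteq> Q" using assms by (simp add: P_def Q_def)
  have e: "((\<lambda>t. (a + t *\<^sub>R h, b + t *\<^sub>R k)) has_derivative (\<lambda>dt. (dt *\<^sub>R h, dt *\<^sub>R k))) (at t)"
    by (intro has_derivative_Pair aff_deriv)
  have LD: "(L has_derivative (\<lambda>c. DG (Q, Q - P) (0, snd c) - DG (P, Q - P) (0, fst c))) (at (a + t *\<^sub>R h, b + t *\<^sub>R k))"
    using L_deriv[OF PQ] by (simp add: P_def Q_def)
  have zP: "(P, Q - P) \<in> S" and zQ: "(Q, Q - P) \<in> S" using PQ by auto
  have "((\<lambda>t. L (a + t *\<^sub>R h, b + t *\<^sub>R k)) has_derivative (\<lambda>dt. DG (Q, Q - P) (0, dt *\<^sub>R k) - DG (P, Q - P) (0, dt *\<^sub>R h))) (at t)"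
    using has_derivative_compose[OF e LD] by simp
  moreover have "(\<lambda>dt. DG (Q, Q - P) (0, dt *\<^sub>R k) - DG (P, Q - P) (0, dt *\<^sub>R h)) = (*) (DG (Q, Q - P) (0,k) - DG (P, Q - P) (0,h))"
  proof
    fix dt :: real
    have "DG (Q, Q - P) (dt *\<^sub>R (0, k)) = dt * DG (Q, Q - P) (0,k)" by (rule DG_scale[OF zQ])
    moreover have "DG (P, Q - P) (dt *\<^sub>R (0, h)) = dt * DG (P, Q - P) (0,h)" by (rule DG_scale[OF zP])
    ultimately show "DG (Q, Q - P) (0, dt *\<^sub>R k) - DG (P, Q - P) (0, dt *\<^sub>R h) = (DG (Q, Q - P) (0,k) - DG (P, Q - P) (0,h)) * dt"
      by (simp add: algebra_simps)
  qed
  ultimately show ?thesis unfolding has_field_derivative_def P_def Q_def by simp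
qed

end


context FP
begin

lemma DG_zero': "z \<in> S \<Longrightarrow> DG z (0,0) = 0"
  using DG_zero by (simp add: zero_prod_def)

lemma D2_neg2: "z \<in> S \<Longrightarrow> D2 z c (0, - h) = - D2 z c (0, h)"
  using D2_scale[of z c "-1" "(0,h)"] by simp

lemma D2_swap:
  assumes w: "w \<noteq> 0"
  shows "D2 (p + w, w) (0,k) (0,h) = D2 (p, w) (0,h) (0,k)"
proof -
  define q where "q = p + w"
  define N where "N = 2 * (norm h + norm k + 1)"
  have N: "N > 0" unfolding N_def by (smt (verit) norm_ge_zero)
  define \<delta> where "\<delta> = norm w / N"
  have \<delta>: "\<delta> > 0" using w N by (simp add: \<delta>_def)
  have W: "w + t *\<^sub>R k - s *\<^sub>R h \<noteq> 0" if st: "\<bar>s\<bar> < \<delta>" "\<bar>t\<bar> < \<delta>" for s t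
  proof
    assume eq: "w + t *\<^sub>R k - s *\<^sub>R h = 0"
    have "norm (t *\<^sub>R k - s *\<^sub>R h) \<le> norm (t *\<^sub>R k) + norm (s *\<^sub>R h)" by (rule norm_triangle_ineq4)
    also have "\<dots> = \<bar>t\<bar> * norm k + \<bar>s\<bar> * norm h" by simp
    also have "\<dots> \<le> \<delta> * norm k + \<delta> * norm h"
      using st by (intro add_mono mult_right_mono) auto
    also have "\<dots> < \<delta> * N"
    proof -
      have "norm k + norm h < N" unfolding N_def by (smt (verit) norm_ge_zero)
      from mult_strict_left_mono[OF this \<delta>] show ?thesis by (simp add: distrib_left)
    qed
    also have "\<dots> = norm w" unfolding \<delta>_def using N by simp
    finally have "norm (t *\<^sub>R k - s *\<^sub>R h) < norm w" .
    moreover have "t *\<^sub>R k - s *\<^sub>R h = - w" using eq by (simp add: algebra_simps)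
    ultimately show False by simp
  qed
  define \<phi> where "\<phi> s t = L (p + s *\<^sub>R h, q + t *\<^sub>R k)" for s t
  define B where "B s t = - DG (p + s *\<^sub>R h, w + t *\<^sub>R k - s *\<^sub>R h) (0,h)" for s t
  define A where "A s t = DG (q + t *\<^sub>R k, w + t *\<^sub>R k - s *\<^sub>R h) (0,k)" for s t
  define Bt where "Bt s t = - D2 (p + s *\<^sub>R h, w + t *\<^sub>R k - s *\<^sub>R h) (0,h) (0,k)" for s t
  have phis: "((\<lambda>s. \<phi> s t) has_real_derivative B s t) (at s)" if st: "\<bar>s\<bar> < \<delta>" "\<bar>t\<bar> < \<delta>" for s t
  proof -
    have ne: "(q + t *\<^sub>R k) + s *\<^sub>R 0 \<noteq> p + s *\<^sub>R h" using W[OF st] by (simp add: q_def algebra_simps)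
    have zS: "(q + t *\<^sub>R k + s *\<^sub>R 0, (q + t *\<^sub>R k + s *\<^sub>R 0) - (p + s *\<^sub>R h)) \<in> S" using ne by simp
    have "((\<lambda>s. L (p + s *\<^sub>R h, (q + t *\<^sub>R k) + s *\<^sub>R 0)) has_real_derivative
      (DG (q + t *\<^sub>R k + s *\<^sub>R 0, (q + t *\<^sub>R k + s *\<^sub>R 0) - (p + s *\<^sub>R h)) (0,0)
       - DG (p + s *\<^sub>R h, (q + t *\<^sub>R k + s *\<^sub>R 0) - (p + s *\<^sub>R h)) (0,h))) (at s)"
      by (rule L_line[OF ne])
    moreover have "(\<lambda>s. L (p + s *\<^sub>R h, (q + t *\<^sub>R k) + s *\<^sub>R 0)) = (\<lambda>s. \<phi> s t)"
      by (simp add: \<phi>_def)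
    moreover have "DG (q + t *\<^sub>R k + s *\<^sub>R 0, (q + t *\<^sub>R k + s *\<^sub>R 0) - (p + s *\<^sub>R h)) (0,0)
       - DG (p + s *\<^sub>R h, (q + t *\<^sub>R k + s *\<^sub>R 0) - (p + s *\<^sub>R h)) (0,h) = B s t"
      unfolding DG_zero'[OF zS] by (simp add: B_def q_def algebra_simps)
    ultimately show ?thesis by simp
  qed
  have phit: "((\<lambda>t. \<phi> s t) has_real_derivative A s t) (at t)" if st: "\<bar>s\<bar> < \<delta>" "\<bar>t\<bar> < \<delta>" for s t
  proof -
    have ne: "q + t *\<^sub>R k \<noteq> (p + s *\<^sub>R h) + t *\<^sub>R 0" using W[OF st] by (simp add: q_def algebra_simps)
    have zS: "(p + s *\<^sub>R h + t *\<^sub>R 0, (q + t *\<^sub>R k) - (p + s *\<^sub>R h + t *\<^sub>R 0)) \<in> S" using ne by simp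
    have "((\<lambda>t. L ((p + s *\<^sub>R h) + t *\<^sub>R 0, q + t *\<^sub>R k)) has_real_derivative
      (DG (q + t *\<^sub>R k, (q + t *\<^sub>R k) - (p + s *\<^sub>R h + t *\<^sub>R 0)) (0,k)
       - DG (p + s *\<^sub>R h + t *\<^sub>R 0, (q + t *\<^sub>R k) - (p + s *\<^sub>R h + t *\<^sub>R 0)) (0,0))) (at t)"
      by (rule L_line[OF ne])
    moreover have "(\<lambda>t. L ((p + s *\<^sub>R h) + t *\<^sub>R 0, q + t *\<^sub>R k)) = (\<lambda>t. \<phi> s t)"
      by (simp add: \<phi>_def)
    moreover have "DG (q + t *\<^sub>R k, (q + t *\<^sub>R k) - (p + s *\<^sub>R h + t *\<^sub>R 0)) (0,k)
       - DG (p + s *\<^sub>R h + t *\<^sub>R 0, (q + t *\<^sub>R k) - (p + s *\<^sub>R h + t *\<^sub>R 0)) (0,0) = A s t"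
      unfolding DG_zero'[OF zS] by (simp add: A_def q_def algebra_simps)
    ultimately show ?thesis by simp
  qed
  have Btd: "((\<lambda>t. B s t) has_real_derivative Bt s t) (at t)" if st: "\<bar>s\<bar> < \<delta>" "\<bar>t\<bar> < \<delta>" for s t
  proof -
    have ne: "(w - s *\<^sub>R h) + t *\<^sub>R k \<noteq> 0" using W[OF st] by (simp add: algebra_simps)
    have "((\<lambda>t. DG ((p + s *\<^sub>R h) + t *\<^sub>R 0, (w - s *\<^sub>R h) + t *\<^sub>R k) (0,h)) has_real_derivative
       D2 ((p + s *\<^sub>R h) + t *\<^sub>R 0, (w - s *\<^sub>R h) + t *\<^sub>R k) (0,h) (0,k)) (at t)"
      by (rule DG_line[OF ne])
    from DERIV_minus[OF this] show ?thesis
      unfolding B_def Bt_def by (simp add: algebra_simps)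
  qed
  have As: "((\<lambda>s. A s 0) has_real_derivative (- D2 (q, w) (0,k) (0,h))) (at 0)"
  proof -
    have ne: "w + 0 *\<^sub>R (-h) \<noteq> 0" using w by simp
    have zS: "(q + 0 *\<^sub>R 0, w + 0 *\<^sub>R (-h)) \<in> S" using w by simp
    have "((\<lambda>s. DG (q + s *\<^sub>R 0, w + s *\<^sub>R (-h)) (0,k)) has_real_derivative
       D2 (q + 0 *\<^sub>R 0, w + 0 *\<^sub>R (-h)) (0,k) (0, -h)) (at 0)"
      by (rule DG_line[OF ne])
    then show ?thesis unfolding A_def D2_neg2[OF zS] by (simp add: algebra_simps)
  qed
  have cont: "continuous_on ({-\<delta><..<\<delta>} \<times> {-\<delta><..<\<delta>}) (\<lambda>(s,t). Bt s t)"
  proof -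
    have "continuous_on ({-\<delta><..<\<delta>} \<times> {-\<delta><..<\<delta>}) (\<lambda>x. (\<lambda>z. D2 z (0,h) (0,k)) ((\<lambda>x. (p + fst x *\<^sub>R h, w + snd x *\<^sub>R k - fst x *\<^sub>R h)) x))"
    proof (rule continuous_on_compose2[OF D2_cont])
      show "continuous_on ({-\<delta><..<\<delta>} \<times> {-\<delta><..<\<delta>}) (\<lambda>x. (p + fst x *\<^sub>R h, w + snd x *\<^sub>R k - fst x *\<^sub>R h))"
        by (intro continuous_intros)
      show "(\<lambda>x. (p + fst x *\<^sub>R h, w + snd x *\<^sub>R k - fst x *\<^sub>R h)) ` ({-\<delta><..<\<delta>} \<times> {-\<delta><..<\<delta>}) \<subseteq> S"
        using W by (auto simp: abs_less_iff)
    qed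
    then have "continuous_on ({-\<delta><..<\<delta>} \<times> {-\<delta><..<\<delta>}) (\<lambda>x. - D2 (p + fst x *\<^sub>R h, w + snd x *\<^sub>R k - fst x *\<^sub>R h) (0,h) (0,k))"
      by (rule continuous_on_minus)
    then show ?thesis by (simp add: Bt_def case_prod_beta)
  qed
  have "- D2 (q, w) (0,k) (0,h) = Bt 0 0"
    by (rule schwarz2[OF \<delta> phis phit Btd As cont])
  then show ?thesis by (simp add: Bt_def q_def)
qed

end


lemma fd_periodic:
  assumes per: "\<And>z. f (z + a) = f z"
  shows "frechet_derivative f (at (z + a)) = frechet_derivative f (at z)"
proof -
  have sh: "((\<lambda>y. y + c) has_derivative (\<lambda>h. h)) (at x)" for c x :: 'a
    using has_derivative_add[OF has_derivative_ident has_derivative_const[of c]] by simp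
  have "(f has_derivative D) (at (z + a)) \<longleftrightarrow> (f has_derivative D) (at z)" for D
  proof
    assume d: "(f has_derivative D) (at (z + a))"
    have "((\<lambda>y. f (y + a)) has_derivative (\<lambda>h. D h)) (at z)"
      using has_derivative_compose[OF sh[of a z] d] by simp
    moreover have "(\<lambda>y. f (y + a)) = f" using per by auto
    ultimately show "(f has_derivative D) (at z)" by simp
  next
    assume d: "(f has_derivative D) (at z)"
    have d': "(f has_derivative D) (at ((\<lambda>y. y + (- a)) (z + a)))" using d by simp
    have "((\<lambda>y. f (y + - a)) has_derivative (\<lambda>h. D h)) (at (z + a))"
      using has_derivative_compose[OF sh[of "-a" "z + a"] d'] by simp
    moreover have "(\<lambda>y. f (y + - a)) = f" using per[of "y + - a" for y] by auto
    ultimately show "(f has_derivative D) (at (z + a))" by simp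
  qed
  then show ?thesis unfolding frechet_derivative_def by simp
qed

lemma irr_between:
  fixes a b :: real
  assumes "a < b"
  shows "\<exists>x. a < x \<and> x < b \<and> x \<notin> \<rat>"
proof (rule ccontr)
  assume "\<not> ?thesis"
  then have "{a<..<b} \<subseteq> \<rat>" by auto
  then have "countable {a<..<b}" using countable_rat countable_subset by blast
  then show False using uncountable_open_interval assms by blast
qed

context FP
begin

lemma D2_shift_pos:
  assumes c: "c > 0" and w: "w \<noteq> 0"
  shows "D2 (p + c *\<^sub>R w, w) (0,k) (0,h) = D2 (p,w) (0,h) (0,k)"
proof -
  have cw: "c *\<^sub>R w \<noteq> 0" using c w by simp
  have "D2 (p + c *\<^sub>R w, w) (0,k) (0,h) = c * D2 (p + c *\<^sub>R w, c *\<^sub>R w) (0,k) (0,h)"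
    using D2_hom[OF c w] by simp
  also have "\<dots> = c * D2 (p, c *\<^sub>R w) (0,h) (0,k)"
    using D2_swap[OF cw] by simp
  also have "\<dots> = D2 (p,w) (0,h) (0,k)"
    using D2_hom[OF c w] by simp
  finally show ?thesis .
qed

lemma D2_isCont:
  assumes w: "w \<noteq> 0"
  shows "isCont (\<lambda>x. D2 (x,w) c d) x"
proof -
  have "isCont (\<lambda>z. D2 z c d) (x,w)"
  proof -
    have "\<forall>z\<in>S. isCont (\<lambda>z. D2 z c d) z"
      using continuous_on_eq_continuous_at[OF S_open] D2_cont by blast
    then show ?thesis using w by simp
  qed
  moreover have "isCont (\<lambda>x. (x,w)) x" by (intro continuous_intros)
  ultimately show ?thesis using isCont_o2 by fastforce
qed

lemma D2_isCont_w:
  assumes w: "w \<noteq> 0"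
  shows "isCont (\<lambda>w. D2 (x,w) c d) w"
proof -
  have "isCont (\<lambda>z. D2 z c d) (x,w)"
  proof -
    have "\<forall>z\<in>S. isCont (\<lambda>z. D2 z c d) z"
      using continuous_on_eq_continuous_at[OF S_open] D2_cont by blast
    then show ?thesis using w by simp
  qed
  moreover have "isCont (\<lambda>w. (x,w)) w" by (intro continuous_intros)
  ultimately show ?thesis using isCont_o2 by fastforce
qed

lemma D2_sym:
  assumes w: "w \<noteq> 0"
  shows "D2 (p,w) (0,k) (0,h) = D2 (p,w) (0,h) (0,k)"
proof -
  define g where "g c = D2 (p + c *\<^sub>R w, w) (0,k) (0,h)" for c :: real
  have "isCont g 0"
  proof -
    have "isCont (\<lambda>c::real. p + c *\<^sub>R w) 0" by (intro continuous_intros)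
    moreover have "isCont (\<lambda>x. D2 (x,w) (0,k) (0,h)) (p + 0 *\<^sub>R w)" by (rule D2_isCont[OF w])
    ultimately show ?thesis unfolding g_def using isCont_o2 by fastforce
  qed
  then have t1: "(g \<longlongrightarrow> g 0) (at_right 0)"
    by (simp add: isCont_def filterlim_at_split)
  have "eventually (\<lambda>c. g c = D2 (p,w) (0,h) (0,k)) (at_right 0)"
    unfolding eventually_at_right[OF zero_less_one]
    using D2_shift_pos[OF _ w] unfolding g_def by (intro exI[of _ 1]) auto
  then have t2: "(g \<longlongrightarrow> D2 (p,w) (0,h) (0,k)) (at_right 0)"
    by (rule tendsto_eventually)
  have "g 0 = D2 (p,w) (0,h) (0,k)"
    using tendsto_unique[OF trivial_limit_at_right_real t1 t2] .
  then show ?thesis by (simp add: g_def)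
qed

lemma D2_inv:
  assumes w: "w \<noteq> 0"
  shows "D2 (p + c *\<^sub>R w, w) (0,k) (0,h) = D2 (p,w) (0,k) (0,h)"
proof (cases "c > 0")
  case True
  then show ?thesis using D2_shift_pos[OF True w] D2_sym[OF w] by simp
next
  case False
  show ?thesis
  proof (cases "c = 0")
    case True then show ?thesis by simp
  next
    case False
    then have c: "- c > 0" using \<open>\<not> c > 0\<close> by simp
    have A: "D2 ((p + c *\<^sub>R w) + (- c) *\<^sub>R w, w) (0,k) (0,h) = D2 (p + c *\<^sub>R w, w) (0,h) (0,k)"
      by (rule D2_shift_pos[OF c w])
    have B: "(p + c *\<^sub>R w) + (- c) *\<^sub>R w = p" by simp
    have C: "D2 (p + c *\<^sub>R w, w) (0,h) (0,k) = D2 (p + c *\<^sub>R w, w) (0,k) (0,h)"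
      by (rule D2_sym[OF w, symmetric])
    from A B C show ?thesis by simp
  qed
qed

lemma G_per: "(\<forall>i. m $ i \<in> \<int>) \<Longrightarrow> G (z + (m,0)) = G z"
  using per unfolding periodic_def G_def by simp

lemma DG_per:
  assumes m: "\<forall>i. m $ i \<in> \<int>"
  shows "DG (x + m, v) c = DG (x, v) c"
proof -
  have "frechet_derivative G (at ((x,v) + (m,0))) = frechet_derivative G (at (x,v))"
    by (rule fd_periodic) (use G_per[OF m] in auto)
  then show ?thesis unfolding DG_def by simp
qed

lemma D2_per:
  assumes m: "\<forall>i. m $ i \<in> \<int>"
  shows "D2 (x + m, v) c d = D2 (x, v) c d"
proof -
  have "frechet_derivative (\<lambda>z. DG z c) (at ((x,v) + (m,0))) = frechet_derivative (\<lambda>z. DG z c) (at (x,v))"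
  proof (rule fd_periodic)
    fix z :: "R2 \<times> R2"
    show "DG (z + (m,0)) c = DG z c"
      using DG_per[OF m, of "fst z" "snd z" c] by (cases z) simp
  qed
  then show ?thesis unfolding D2_def by simp
qed

end


lemma vec2_eqI: "(x::real^2) $ 1 = y $ 1 \<Longrightarrow> x $ 2 = y $ 2 \<Longrightarrow> x = y"
  by (simp add: vec_eq_iff forall_2)

lemma axis21: "(axis 2 1 :: real^2) $ 1 = 0" "(axis 2 1 :: real^2) $ 2 = 1"
  by (simp_all add: axis_def)

context FP
begin

lemma D2_const_irr:
  assumes w1: "w $ 1 \<noteq> 0" and irr: "w $ 2 / w $ 1 \<notin> \<rat>"
  shows "D2 (x,w) (0,k) (0,h) = D2 (y,w) (0,k) (0,h)"
proof -
  have w: "w \<noteq> 0" using w1 by auto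
  define R where "R x = D2 (x,w) (0,k) (0,h)" for x
  define e2 :: R2 where "e2 = axis 2 1"
  define \<alpha> where "\<alpha> = w $ 2 / w $ 1"
  have Rint: "R (z + m) = R z" if "\<forall>i. m $ i \<in> \<int>" for z m
    unfolding R_def by (rule D2_per[OF that])
  have Rw: "R (z + c *\<^sub>R w) = R z" for z c
    unfolding R_def by (rule D2_inv[OF w])
  have vert: "R (z + s *\<^sub>R e2) = R z" for z s
  proof (rule ccontr)
    assume ne: "R (z + s *\<^sub>R e2) \<noteq> R z"
    define \<epsilon> where "\<epsilon> = \<bar>R (z + s *\<^sub>R e2) - R z\<bar>"
    have \<epsilon>: "\<epsilon> > 0" using ne by (simp add: \<epsilon>_def)
    have "isCont (\<lambda>u. R (z + u *\<^sub>R e2)) s"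
    proof -
      have "isCont (\<lambda>u::real. z + u *\<^sub>R e2) s" by (intro continuous_intros)
      moreover have "isCont R (z + s *\<^sub>R e2)" unfolding R_def by (rule D2_isCont[OF w])
      ultimately show ?thesis using isCont_o2 by fastforce
    qed
    then obtain \<delta> where \<delta>: "\<delta> > 0" "\<And>u. dist u s < \<delta> \<Longrightarrow> dist (R (z + u *\<^sub>R e2)) (R (z + s *\<^sub>R e2)) < \<epsilon>"
      unfolding continuous_at_eps_delta using \<epsilon> by blast
    obtain hh kk :: int where kk: "kk > 0" "\<bar>of_int kk * \<alpha> - of_int hh - s\<bar> < \<delta>"
      using sequence_of_fractional_parts_is_dense[where \<theta>=\<alpha> and \<alpha>=s and \<epsilon>=\<delta>] irr \<delta>(1)
      unfolding \<alpha>_def by blast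
    define u where "u = of_int kk * \<alpha> - of_int hh"
    define m :: R2 where "m = (\<chi> i. if i = 1 then - of_int kk else - of_int hh)"
    have mi: "\<forall>i. m $ i \<in> \<int>" by (simp add: m_def)
    have eq: "z + u *\<^sub>R e2 = (z + (of_int kk / w $ 1) *\<^sub>R w) + m"
      by (rule vec2_eqI) (simp_all add: u_def m_def e2_def axis21 \<alpha>_def w1)
    have "R (z + u *\<^sub>R e2) = R z" unfolding eq Rint[OF mi] Rw ..
    moreover have "dist u s < \<delta>" using kk(2) by (simp add: u_def dist_real_def)
    ultimately have "dist (R z) (R (z + s *\<^sub>R e2)) < \<epsilon>" using \<delta>(2) by metis
    then show False by (simp add: \<epsilon>_def dist_real_def abs_minus_commute)
  qed
  define c where "c = (y $ 1 - x $ 1) / w $ 1"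
  have "y = (x + c *\<^sub>R w) + (y $ 2 - x $ 2 - c * w $ 2) *\<^sub>R e2"
    by (rule vec2_eqI) (simp_all add: c_def e2_def axis21 w1)
  then have "R y = R x" using vert Rw by metis
  then show ?thesis by (simp add: R_def)
qed

lemma good_dir:
  assumes w: "(w::R2) \<noteq> 0" and \<delta>: "\<delta> > 0"
  shows "\<exists>w'. dist w' w < \<delta> \<and> w' $ 1 \<noteq> 0 \<and> w' $ 2 / w' $ 1 \<notin> \<rat>"
proof -
  have nb: "dist w' w \<le> \<bar>w' $ 1 - w $ 1\<bar> + \<bar>w' $ 2 - w $ 2\<bar>" for w' :: R2
    using norm_le_l1_cart[of "w' - w"] by (simp add: dist_norm sum_2)
  show ?thesis
  proof (cases "w $ 1 = 0")
    case False
    define a where "a = w $ 2 / w $ 1"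
    define r where "r = \<delta> / (2 * \<bar>w $ 1\<bar>)"
    have r: "r > 0" using False \<delta> by (simp add: r_def)
    obtain \<beta> where \<beta>: "a - r < \<beta>" "\<beta> < a + r" "\<beta> \<notin> \<rat>"
      using irr_between[of "a - r" "a + r"] r by auto
    define w' :: R2 where "w' = (\<chi> i. if i = 1 then w $ 1 else w $ 1 * \<beta>)"
    have w'1: "w' $ 1 = w $ 1" and w'2: "w' $ 2 = w $ 1 * \<beta>" by (simp_all add: w'_def)
    have "\<bar>w' $ 2 - w $ 2\<bar> = \<bar>w $ 1\<bar> * \<bar>\<beta> - a\<bar>"
      using False by (simp add: w'2 a_def abs_mult[symmetric] algebra_simps)
    also have "\<dots> < \<bar>w $ 1\<bar> * r"
    proof (rule mult_strict_left_mono)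
      show "\<bar>\<beta> - a\<bar> < r" using \<beta>(1,2) by linarith
      show "0 < \<bar>w $ 1\<bar>" using False by simp
    qed
    also have "\<dots> = \<delta> / 2" using False by (simp add: r_def)
    finally have "dist w' w < \<delta>" using nb[of w'] w'1 \<delta> by simp
    moreover have "w' $ 2 / w' $ 1 = \<beta>" using False by (simp add: w'1 w'2)
    ultimately show ?thesis using \<beta>(3) False w'1 by (intro exI[of _ w']) simp
  next
    case True
    have w2: "w $ 2 \<noteq> 0" using w True by (auto simp: vec_eq_iff forall_2)
    define M where "M = 2 * \<bar>w $ 2\<bar> / \<delta> + 1"
    have M: "M > 0" using \<delta> by (simp add: M_def add_nonneg_pos)
    obtain \<beta> where \<beta>: "M < \<beta>" "\<beta> < M + 1" "\<beta> \<notin> \<rat>"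
      using irr_between[of M "M + 1"] by auto
    have bpos: "\<beta> > 0" using M \<beta> by simp
    define w' :: R2 where "w' = (\<chi> i. if i = 1 then w $ 2 / \<beta> else w $ 2)"
    have w'1: "w' $ 1 = w $ 2 / \<beta>" and w'2: "w' $ 2 = w $ 2" by (simp_all add: w'_def)
    have "\<bar>w $ 2\<bar> * 2 < \<beta> * \<delta>"
    proof -
      have "2 * \<bar>w $ 2\<bar> / \<delta> < \<beta>" using \<beta> by (simp add: M_def)
      then show ?thesis using \<delta> by (simp add: field_simps)
    qed
    then have "\<bar>w $ 2\<bar> < \<delta> / 2 * \<beta>" by (simp add: mult.commute)
    then have A: "\<bar>w $ 2\<bar> / \<beta> < \<delta> / 2" by (simp add: pos_divide_less_eq[OF bpos])
    have "dist w' w \<le> \<bar>w $ 2\<bar> / \<beta>" using nb[of w'] w'1 w'2 True bpos by simp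
    then have "dist w' w < \<delta>" using A \<delta> by linarith
    moreover have "w' $ 1 \<noteq> 0" using w2 bpos by (simp add: w'1)
    moreover have "w' $ 2 / w' $ 1 = \<beta>" using w2 bpos by (simp add: w'1 w'2)
    ultimately show ?thesis using \<beta>(3) by (intro exI[of _ w']) simp
  qed
qed

lemma D2_const:
  assumes w: "w \<noteq> 0"
  shows "D2 (x,w) (0,k) (0,h) = D2 (y,w) (0,k) (0,h)"
proof (rule ccontr)
  define g where "g w' = D2 (x,w') (0,k) (0,h) - D2 (y,w') (0,k) (0,h)" for w'
  assume ne: "D2 (x,w) (0,k) (0,h) \<noteq> D2 (y,w) (0,k) (0,h)"
  define \<epsilon> where "\<epsilon> = \<bar>g w\<bar>"
  have \<epsilon>: "\<epsilon> > 0" using ne by (simp add: \<epsilon>_def g_def)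
  have "isCont g w" unfolding g_def by (intro isCont_diff D2_isCont_w w)
  then obtain \<delta> where \<delta>: "\<delta> > 0" "\<And>w'. dist w' w < \<delta> \<Longrightarrow> dist (g w') (g w) < \<epsilon>"
    unfolding continuous_at_eps_delta using \<epsilon> by blast
  obtain w' where w': "dist w' w < \<delta>" "w' $ 1 \<noteq> 0" "w' $ 2 / w' $ 1 \<notin> \<rat>"
    using good_dir[OF w \<delta>(1)] by blast
  have "g w' = 0" unfolding g_def using D2_const_irr[OF w'(2,3)] by simp
  then have "dist 0 (g w) < \<epsilon>" using \<delta>(2)[OF w'(1)] by simp
  then show False by (simp add: \<epsilon>_def)
qed

end


context FP
begin

lemma DG_v_deriv:
  assumes v: "v \<noteq> 0"
  shows "((\<lambda>v. DG (x,v) c) has_derivative (\<lambda>h. D2 (x,v) c (0,h))) (at v)"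
proof -
  have e: "((\<lambda>w. (x, w)) has_derivative (\<lambda>h. (0, h))) (at v)"
    by (rule has_derivative_Pair[OF has_derivative_const has_derivative_ident])
  have b: "((\<lambda>z. DG z c) has_derivative D2 (x, v) c) (at ((\<lambda>w. (x, w)) v))"
    using DG_deriv v by simp
  show ?thesis using has_derivative_compose[OF e b] .
qed

lemma E_const:
  assumes v: "v \<noteq> 0" and v0: "v0 \<noteq> 0"
  shows "DG (x,v) (0,k) - DG (y,v) (0,k) = DG (x,v0) (0,k) - DG (y,v0) (0,k)"
proof -
  define E where "E v = DG (x,v) (0,k) - DG (y,v) (0,k)" for v
  have d: "(E has_derivative (\<lambda>h. 0)) (at u)" if u: "u \<in> - {0}" for u
  proof -
    have u0: "u \<noteq> 0" using u by simp
    have "(E has_derivative (\<lambda>h. D2 (x,u) (0,k) (0,h) - D2 (y,u) (0,k) (0,h))) (at u)"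
      unfolding E_def by (intro has_derivative_diff DG_v_deriv u0)
    moreover have "(\<lambda>h. D2 (x,u) (0,k) (0,h) - D2 (y,u) (0,k) (0,h)) = (\<lambda>h. 0)"
      by (rule ext, subst D2_const[OF u0, of x _ _ y], simp)
    ultimately show ?thesis by simp
  qed
  have "E v = E v0"
  proof (rule has_derivative_zero_unique_connected[OF _ _ d])
    show "open (- {0::R2})" by (rule open_Compl) simp
    show "connected (- {0::R2})" by (rule connected_punctured_universe) simp
  qed (use v v0 in auto)
  then show ?thesis by (simp add: E_def)
qed

lemma F_diff:
  assumes v0: "v0 \<noteq> 0"
  shows "F x v - F y v = DG (x,v0) (0,v) - DG (y,v0) (0,v)"
proof (cases "v = 0")
  case True
  then show ?thesis using DG_zero' v0 by simp
next
  case False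
  have "F x v - F y v = DG (x,v) (0,v) - DG (y,v) (0,v)" using euler[OF False] by simp
  also have "\<dots> = DG (x,v0) (0,v) - DG (y,v0) (0,v)" by (rule E_const[OF False v0])
  finally show ?thesis .
qed

lemma g_deriv:
  assumes qp: "q \<noteq> p"
  shows "((\<lambda>q. L (p,q) - F 0 (q - p)) has_derivative (\<lambda>k. F q k - F 0 k)) (at q)"
proof -
  have pq: "p \<noteq> q" using qp by simp
  have w: "q - p \<noteq> 0" using qp by simp
  have e: "((\<lambda>q. (p, q)) has_derivative (\<lambda>h. (0, h))) (at q)"
    by (rule has_derivative_Pair[OF has_derivative_const has_derivative_ident])
  have LD: "(L has_derivative (\<lambda>c. DG (q, q - p) (0, snd c) - DG (p, q - p) (0, fst c))) (at ((\<lambda>q. (p, q)) q))"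
    using L_deriv[OF pq] by simp
  have d1: "((\<lambda>q. L (p,q)) has_derivative (\<lambda>k. DG (q, q - p) (0, k) - DG (p, q - p) (0, 0))) (at q)"
    using has_derivative_compose[OF e LD] by simp
  have e2: "((\<lambda>q. q - p) has_derivative (\<lambda>h. h)) (at q)"
    using has_derivative_diff[OF has_derivative_ident has_derivative_const[of p]] by simp
  have FD: "(F 0 has_derivative (\<lambda>k. DG (0, q - p) (0, k))) (at ((\<lambda>q. q - p) q))"
    using Fv_deriv[OF w] by simp
  have d2: "((\<lambda>q. F 0 (q - p)) has_derivative (\<lambda>k. DG (0, q - p) (0, k))) (at q)"
    using has_derivative_compose[OF e2 FD] .
  have "((\<lambda>q. L (p,q) - F 0 (q - p)) has_derivative
      (\<lambda>k. (DG (q, q - p) (0, k) - DG (p, q - p) (0, 0)) - DG (0, q - p) (0, k))) (at q)"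
    by (rule has_derivative_diff[OF d1 d2])
  moreover have "(\<lambda>k. (DG (q, q - p) (0, k) - DG (p, q - p) (0, 0)) - DG (0, q - p) (0, k)) = (\<lambda>k. F q k - F 0 k)"
  proof
    fix k
    have "DG (p, q - p) (0, 0) = 0" using DG_zero' w by simp
    then show "(DG (q, q - p) (0, k) - DG (p, q - p) (0, 0)) - DG (0, q - p) (0, k) = F q k - F 0 k"
      using F_diff[OF w, of q k 0] by simp
  qed
  ultimately show ?thesis by simp
qed

end


lemma Ck_slice:
  fixes g :: "'a::euclidean_space \<times> 'b::euclidean_space \<Rightarrow> real"
  assumes S: "open S" and bS: "\<And>x. (x,b) \<in> S"
  shows "Ck k S g \<Longrightarrow> Ck k UNIV (\<lambda>x. g (x,b))"
proof (induction k arbitrary: g)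
  case 0
  then have "continuous_on S g" by simp
  then have "continuous_on UNIV (\<lambda>x. g (x,b))"
    by (rule continuous_on_compose2[OF _ continuous_on_Pair[OF continuous_on_id continuous_on_const]])
       (use bS in auto)
  then show ?case by simp
next
  case (Suc k)
  have gd: "g differentiable_on S" and gk: "\<And>e. e \<in> Basis \<Longrightarrow> Ck k S (\<lambda>z. frechet_derivative g (at z) e)"
    using Suc.prems by auto
  have hd: "((\<lambda>x. g (x,b)) has_derivative (\<lambda>h. frechet_derivative g (at (x,b)) (h,0))) (at x)" for x
  proof -
    have e: "((\<lambda>y. (y,b)) has_derivative (\<lambda>h. (h,0))) (at x)"
      by (rule has_derivative_Pair[OF has_derivative_ident has_derivative_const])
    have "(g has_derivative frechet_derivative g (at (x,b))) (at (x,b))"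
      by (rule fd_works[OF diff_on_open_at[OF gd S bS]])
    then have "(g has_derivative frechet_derivative g (at (x,b))) (at ((\<lambda>y. (y,b)) x))" by simp
    from has_derivative_compose[OF e this] show ?thesis .
  qed
  have "(\<lambda>x. g (x,b)) differentiable_on UNIV"
    using hd unfolding differentiable_on_def differentiable_def by (blast intro: has_derivative_at_withinI)
  moreover have "Ck k UNIV (\<lambda>x. frechet_derivative (\<lambda>x. g (x,b)) (at x) e)" if e: "e \<in> Basis" for e
  proof -
    have eB: "(e, 0) \<in> (Basis :: ('a \<times> 'b) set)" using e by (simp add: Basis_prod_def)
    have "Ck k UNIV (\<lambda>x. frechet_derivative g (at (x,b)) (e,0))"
      using Suc.IH[OF gk[OF eB]] .
    moreover have "(\<lambda>x. frechet_derivative (\<lambda>x. g (x,b)) (at x) e) = (\<lambda>x. frechet_derivative g (at (x,b)) (e,0))"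
      using frechet_derivative_at[OF hd] by metis
    ultimately show ?thesis by simp
  qed
  ultimately show ?case by simp
qed

lemma Ck_minus_const:
  fixes f :: "'a::euclidean_space \<Rightarrow> real"
  shows "Ck k UNIV f \<Longrightarrow> Ck k UNIV (\<lambda>x. f x - c)"
proof (cases k)
  case 0
  assume "Ck k UNIV f"
  then show ?thesis using 0 by (simp add: continuous_on_diff)
next
  case (Suc j)
  assume A: "Ck k UNIV f"
  have fd: "f differentiable_on UNIV" and fk: "\<And>e. e \<in> Basis \<Longrightarrow> Ck j UNIV (\<lambda>x. frechet_derivative f (at x) e)"
    using A Suc by auto
  have hd: "((\<lambda>x. f x - c) has_derivative frechet_derivative f (at x)) (at x)" for x
  proof -
    have "(f has_derivative frechet_derivative f (at x)) (at x)"
      by (rule fd_works[OF diff_on_open_at[OF fd open_UNIV UNIV_I]])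
    from has_derivative_diff[OF this has_derivative_const[of c]] show ?thesis by simp
  qed
  have "(\<lambda>x. f x - c) differentiable_on UNIV"
    using hd unfolding differentiable_on_def differentiable_def by (blast intro: has_derivative_at_withinI)
  moreover have "frechet_derivative (\<lambda>x. f x - c) (at x) = frechet_derivative f (at x)" for x
    by (rule frechet_derivative_at[OF hd, symmetric])
  ultimately show ?thesis using fk Suc by simp
qed

context FP
begin

lemma exists_f: "\<exists>f. \<forall>q. (f has_derivative (\<lambda>k. F q k - F 0 k)) (at q)"
proof -
  define e :: R2 where "e = axis 1 1"
  have ne: "norm e = 1" by (simp add: e_def)
  define g0 where "g0 q = L (0,q) - F 0 (q - 0)" for q
  define ge where "ge q = L (e,q) - F 0 (q - e)" for q
  define B where "B = ball (0::R2) (1/2) - {0}"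
  have Bsub: "q \<in> B \<Longrightarrow> q \<noteq> 0 \<and> q \<noteq> e" for q
    using ne by (auto simp: B_def)
  define z0 where "z0 = (1/4::real) *\<^sub>R e"
  have z0: "z0 \<in> B" using ne by (simp add: B_def z0_def e_def)
  define c where "c = g0 z0 - ge z0"
  have const: "g0 q - ge q = c" if q: "q \<in> B" for q
  proof -
    have d: "((\<lambda>q. g0 q - ge q) has_derivative (\<lambda>h. 0)) (at u)" if u: "u \<in> B" for u
    proof -
      have "((\<lambda>q. g0 q - ge q) has_derivative (\<lambda>k. (F u k - F 0 k) - (F u k - F 0 k))) (at u)"
        unfolding g0_def ge_def using Bsub[OF u] by (intro has_derivative_diff g_deriv) auto
      then show ?thesis by simp
    qed
    have "g0 q - ge q = g0 z0 - ge z0"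
    proof (rule has_derivative_zero_unique_connected[OF _ _ d])
      show "open B" unfolding B_def by (rule open_delete) simp
      show "connected B" unfolding B_def by (rule connected_punctured_ball) simp
    qed (use q z0 in auto)
    then show ?thesis by (simp add: c_def)
  qed
  define f where "f q = (if q = 0 then ge 0 + c else g0 q)" for q
  have "(f has_derivative (\<lambda>k. F q k - F 0 k)) (at q)" for q
  proof (cases "q = 0")
    case False
    have "(g0 has_derivative (\<lambda>k. F q k - F 0 k)) (at q)"
      unfolding g0_def by (rule g_deriv) (use False in simp)
    then show ?thesis
      by (rule has_derivative_transform_within_open[of _ _ _ _ "- {0}"]) (use False in \<open>auto simp: f_def\<close>)
  next
    case True
    have "e \<noteq> 0" using ne by auto
    then have "(ge has_derivative (\<lambda>k. F q k - F 0 k)) (at q)"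
      unfolding ge_def using True by (intro g_deriv) simp
    then have "((\<lambda>q. ge q + c) has_derivative (\<lambda>k. F q k - F 0 k)) (at q)"
      using has_derivative_add[OF _ has_derivative_const[of c]] by fastforce
    then show ?thesis
    proof (rule has_derivative_transform_within_open[of _ _ _ _ "ball 0 (1/2)"])
      fix y :: R2 assume y: "y \<in> ball 0 (1/2)"
      show "ge y + c = f y"
      proof (cases "y = 0")
        case True then show ?thesis by (simp add: f_def)
      next
        case False
        then have "y \<in> B" using y by (simp add: B_def)
        then show ?thesis using const[of y] False by (simp add: f_def)
      qed
    qed (use True in auto)
  qed
  then show ?thesis by blast
qed

lemma main: "\<exists>N f. minkowski_norm N \<and> Ck 3 UNIV f \<and> (\<forall>x v. F x v = N v + frechet_derivative f (at x) v)"
proof -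
  obtain f where f: "\<And>q. (f has_derivative (\<lambda>k. F q k - F 0 k)) (at q)" using exists_f by blast
  have fd: "frechet_derivative f (at x) = (\<lambda>k. F x k - F 0 k)" for x
    using frechet_derivative_at[OF f] by metis
  have "Ck 2 UNIV (\<lambda>x. F x b - F 0 b)" if b: "b \<in> Basis" for b :: R2
  proof -
    have b0: "b \<noteq> 0" using b nonzero_Basis by blast
    have "Ck 2 UNIV (\<lambda>x. G (x,b))"
      by (rule Ck_slice[OF S_open _ G_C2]) (use b0 in simp)
    then have "Ck 2 UNIV (\<lambda>x. F x b)" by (simp add: G_def)
    then show ?thesis by (rule Ck_minus_const)
  qed
  moreover have "f differentiable_on UNIV"
    using f unfolding differentiable_on_def differentiable_def by (blast intro: has_derivative_at_withinI)
  ultimately have C: "f differentiable_on UNIV \<and> (\<forall>b\<in>Basis. Ck 2 UNIV (\<lambda>x. frechet_derivative f (at x) b))"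
    by (simp add: fd)
  have eq3: "(3::nat) = Suc 2" by simp
  have "Ck 3 UNIV f" unfolding eq3 Ck.simps(2)[of 2] by (rule C)
  moreover have "\<forall>x v. F x v = F 0 v + frechet_derivative f (at x) v" by (simp add: fd)
  ultimately show ?thesis using mink by blast
qed

end

theorem theorem3p3:
  fixes F :: "real^2 \<Rightarrow> real^2 \<Rightarrow> real"
  assumes "finsler_C2 F" and "projective F" and "periodic F"
  shows "\<exists>N f. minkowski_norm N \<and> Ck 3 UNIV f \<and>
           (\<forall>x v. F x v = N v + frechet_derivative f (at x) v)"
proof -
  interpret FP F using assms by (unfold_locales)
  show ?thesis by (rule main)
qed

end
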